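(* Let $f:\mathbb{R}^n\to\mathbb{R}$ be $\mathcal C^2$, $\mu$-strongly convex, with $L$-Lipschitz gradient ($0<\mu<L$) and $\eta$-Lipschitz Hessian, let $x_0\in\mathbb{R}^n$, $k\ge1$ an integer, $\rho=1-\frac{\mu}{L}$, and define for $C\ge1$ $$\hat\rho(C)=\tilde\rho(C)+3\frac{\eta}{L^2}\|\nabla f(x_0)\|k^2C^2.$$ Let $C_0=\frac{2+\rho^k}{2-\rho^k}$ and $a=\frac{\eta}{L^2}\|\nabla f(x_0)\|$. Then: (i) if $a<\frac{\rho^k(1-\rho^k)(2-\rho^k)}{3k^2(2+\rho^k)^2}$, there exists a nonempty interval $I$ containing $C_0$ such that $\hat\rho(C)<\rho^k$ for $C\in I$; (ii) if $a<\min\big(\frac{\rho^k(1-\rho^k)(2-\rho^k)}{3k^2(2+\rho^k)^2},\frac{\rho^k-\rho_1}{3k^2C_1^2}\big)$, then $\hat\rho(C)<\rho^k$ for $C\in[C_0,C_1]$; (iii) if $a<\min\big(\frac{\rho^k(1-\rho^k)(2-\rho^k)}{3k^2(2+\rho^k)^2},\frac{\rho^k-\rho_*}{3k^2C_*^2}\big)$, then $\hat\rho(C)<\rho^k$ for $C\in[C_0,C_*]$.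
   Context: $\mathbb{R}_k[X]$ denotes real polynomials of degree at most $k$; $\|p\|_1$ is the sum of absolute values of coefficients of $p$. $\tilde\rho(C)=\min\{\max_{x\in[0,\rho]}|p(x)|:p\in\mathbb{R}_k[X],\ p(1)=1,\ \|p\|_1\le C\}$. $T_k$ is the first-kind Chebyshev polynomial of degree $k$; $C_*=\|p_*\|_1$ with $p_*(X)=T_k(\frac{2X-\rho}{\rho})/|T_k(\frac{2-\rho}{\rho})|$; $\rho_*=\frac{2\beta^k}{1+\beta^{2k}}$ with $\beta=\frac{1-\sqrt{1-\rho}}{1+\sqrt{1-\rho}}$; $\beta_\rho=\frac{\sqrt{1+\rho}-\sqrt{1-\rho}}{\sqrt{1+\rho}+\sqrt{1-\rho}}$, $\rho_1=\frac{2\beta_\rho^k}{1+\beta_\rho^{2k}}$, $C_1=\frac{\rho_1}{2\rho^k}\big((1-\sqrt{1+\rho^2})^k+(1+\sqrt{1+\rho^2})^k\big)$. *)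

theory Defs
  imports "HOL-Analysis.Analysis" "HOL-Computational_Algebra.Polynomial"
begin

definition strongly_convex_on :: "'a::real_inner set \<Rightarrow> real \<Rightarrow> ('a \<Rightarrow> real) \<Rightarrow> bool" where
  "strongly_convex_on S \<mu> f \<longleftrightarrow> convex_on S (\<lambda>x. f x - \<mu> / 2 * (norm x)\<^sup>2)"

definition poly_l1 :: "real poly \<Rightarrow> real" where
  "poly_l1 p = (\<Sum>i\<le>degree p. \<bar>coeff p i\<bar>)"

definition rho_tilde :: "nat \<Rightarrow> real \<Rightarrow> real \<Rightarrow> real" where
  "rho_tilde k \<rho> C = Inf {Sup ((\<lambda>x. \<bar>poly p x\<bar>) ` {0..\<rho>}) | p.
       degree p \<le> k \<and> poly p 1 = 1 \<and> poly_l1 p \<le> C}"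

fun cheb :: "nat \<Rightarrow> real poly" where
  "cheb 0 = 1"
| "cheb (Suc 0) = [:0, 1:]"
| "cheb (Suc (Suc n)) = [:0, 2:] * cheb (Suc n) - cheb n"

definition p_star :: "nat \<Rightarrow> real \<Rightarrow> real poly" where
  "p_star k \<rho> = smult (1 / \<bar>poly (cheb k) ((2 - \<rho>) / \<rho>)\<bar>) (pcompose (cheb k) [:-1, 2 / \<rho>:])"

definition C_star :: "nat \<Rightarrow> real \<Rightarrow> real" where
  "C_star k \<rho> = poly_l1 (p_star k \<rho>)"

definition rho_star :: "nat \<Rightarrow> real \<Rightarrow> real" where
  "rho_star k \<rho> = (let \<beta> = (1 - sqrt (1 - \<rho>)) / (1 + sqrt (1 - \<rho>)) in 2 * \<beta> ^ k / (1 + \<beta> ^ (2 * k)))"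

definition rho_one :: "nat \<Rightarrow> real \<Rightarrow> real" where
  "rho_one k \<rho> = (let \<beta> = (sqrt (1 + \<rho>) - sqrt (1 - \<rho>)) / (sqrt (1 + \<rho>) + sqrt (1 - \<rho>))
                   in 2 * \<beta> ^ k / (1 + \<beta> ^ (2 * k)))"

definition C_one :: "nat \<Rightarrow> real \<Rightarrow> real" where
  "C_one k \<rho> = rho_one k \<rho> / (2 * \<rho> ^ k) *
     ((1 - sqrt (1 + \<rho>\<^sup>2)) ^ k + (1 + sqrt (1 + \<rho>\<^sup>2)) ^ k)"

(* rho_hat(C) = rho_tilde(C) + 3 (eta/L^2) |grad f(x0)| k^2 C^2, written with a = (eta/L^2)|grad f(x0)| *)
definition rho_hat :: "nat \<Rightarrow> real \<Rightarrow> real \<Rightarrow> real \<Rightarrow> real" where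
  "rho_hat k \<rho> a C = rho_tilde k \<rho> C + 3 * a * (real k)\<^sup>2 * C\<^sup>2"

end

theory Submission
  imports Defs
begin

lemma l1_eq:
  assumes "degree p \<le> N"
  shows "poly_l1 p = (\<Sum>i\<le>N. \<bar>coeff p i\<bar>)"
  unfolding poly_l1_def
  by (rule sum.mono_neutral_left) (use assms in \<open>auto simp: coeff_eq_0\<close>)

lemma l1_add: "poly_l1 (p + q) \<le> poly_l1 p + poly_l1 q"
proof -
  let ?N = "max (degree p) (degree q)"
  have "poly_l1 (p + q) = (\<Sum>i\<le>?N. \<bar>coeff (p+q) i\<bar>)"
    by (rule l1_eq) (meson degree_add_le max.cobounded1 max.cobounded2)
  also have "\<dots> \<le> (\<Sum>i\<le>?N. \<bar>coeff p i\<bar> + \<bar>coeff q i\<bar>)"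
    by (rule sum_mono) (simp add: abs_triangle_ineq)
  also have "\<dots> = poly_l1 p + poly_l1 q"
    by (simp add: sum.distrib l1_eq[of p ?N] l1_eq[of q ?N])
  finally show ?thesis .
qed

lemma l1_smult: "poly_l1 (smult c p) = \<bar>c\<bar> * poly_l1 p"
proof -
  have "poly_l1 (smult c p) = (\<Sum>i\<le>degree p. \<bar>coeff (smult c p) i\<bar>)"
    by (rule l1_eq) (simp add: degree_smult_le)
  thus ?thesis by (simp add: poly_l1_def abs_mult sum_distrib_left)
qed

lemma l1_minus: "poly_l1 (- p) = poly_l1 p"
  unfolding poly_l1_def by simp

lemma l1_diff: "poly_l1 (p - q) \<le> poly_l1 p + poly_l1 q"
  using l1_add[of p "-q"] by (simp add: l1_minus)

lemma l1_pCons0: "poly_l1 (pCons 0 p) = poly_l1 p"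
proof -
  have "poly_l1 (pCons 0 p) = (\<Sum>i\<le>Suc (degree p). \<bar>coeff (pCons 0 p) i\<bar>)"
    by (rule l1_eq) (simp add: degree_pCons_le)
  also have "\<dots> = (\<Sum>i\<le>degree p. \<bar>coeff p i\<bar>)"
    by (subst sum.atMost_Suc_shift) simp
  finally show ?thesis by (simp add: poly_l1_def)
qed

lemma l1_const: "poly_l1 [:c:] = \<bar>c\<bar>"
  by (simp add: poly_l1_def)

lemma l1_monom: "poly_l1 (monom c n) = \<bar>c\<bar>"
proof -
  have "poly_l1 (monom c n) = (\<Sum>i\<le>n. \<bar>coeff (monom c n) i\<bar>)"
    by (rule l1_eq) (simp add: degree_monom_le)
  also have "\<dots> = (\<Sum>i\<le>n. if i = n then \<bar>c\<bar> else 0)"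
    by (rule sum.cong) (auto simp: coeff_monom)
  finally show ?thesis by simp
qed

lemma rec_aux:
  fixes A B c :: real
  assumes "A^2 = 2*c*A + 1" "B^2 = 2*c*B + 1"
  shows "2 * c * ((A^Suc n + B^Suc n)/2) + (A^n + B^n)/2 = (A^Suc (Suc n) + B^Suc (Suc n))/2"
proof -
  have "A^Suc (Suc n) = A^2 * A^n" "B^Suc (Suc n) = B^2 * B^n" by (simp_all add: power2_eq_square)
  thus ?thesis using assms by (simp add: field_simps)
qed

fun chs :: "real \<Rightarrow> nat \<Rightarrow> real poly" where
  "chs c 0 = 1"
| "chs c (Suc 0) = [:0, c:]"
| "chs c (Suc (Suc n)) = [:0, 2 * c:] * chs c (Suc n) - chs c n"

lemma poly_chs: "poly (chs c n) x = poly (cheb n) (c * x)"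
  by (induction c n rule: chs.induct) (auto simp: algebra_simps)

lemma degree_chs: "degree (chs c n) \<le> n"
proof (induction c n rule: chs.induct)
  case (3 c n)
  have "degree ([:0, 2 * c:] * chs c (Suc n)) \<le> Suc (Suc n)"
    by (rule order.trans[OF degree_mult_le]) (use 3 in auto)
  moreover have "degree (chs c n) \<le> Suc (Suc n)" using 3 by simp
  ultimately show ?case by (simp add: degree_diff_le)
qed auto

lemma degree_cheb: "degree (cheb n) \<le> n"
proof (induction n rule: cheb.induct)
  case (3 n)
  have "degree ([:0, 2:] * cheb (Suc n)) \<le> Suc (Suc n)"
    by (rule order.trans[OF degree_mult_le]) (use 3 in auto)
  moreover have "degree (cheb n) \<le> Suc (Suc n)" using 3 by simp
  ultimately show ?case by (simp add: degree_diff_le)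
qed auto

lemma cheb_cos: "poly (cheb n) (cos t) = cos (real n * t)"
proof (induction n rule: cheb.induct)
  case (3 n)
  define u where "u = real (Suc n) * t"
  have a: "cos (real (Suc (Suc n)) * t) = cos (u + t)" by (simp add: u_def algebra_simps)
  have b: "cos (real n * t) = cos (u - t)" by (simp add: u_def algebra_simps)
  have c: "cos (real (Suc n) * t) = cos u" by (simp add: u_def)
  have ih1: "poly (cheb (Suc n)) (cos t) = cos u" using 3(1) c by simp
  have ih0: "poly (cheb n) (cos t) = cos (u - t)" using 3(2) b by simp
  show ?case unfolding a by (simp add: ih1 ih0 cos_add cos_diff)
qed auto

lemma cheb_bound: "-1 \<le> x \<Longrightarrow> x \<le> 1 \<Longrightarrow> \<bar>poly (cheb n) x\<bar> \<le> 1"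
  using cheb_cos[of n "arccos x"] by (simp add: cos_arccos)

lemma cheb_closed0: "b * c = 1 \<Longrightarrow> poly (cheb n) ((b + c)/2) = (c^n + b^n)/2"
proof (induction n rule: cheb.induct)
  case (3 n)
  have e1: "b * c^(Suc n) = c^n" using 3(3) by (simp add: algebra_simps)
  have e2: "c * b^(Suc n) = b^n" using 3(3) by (simp add: algebra_simps)
  have "poly (cheb (Suc (Suc n))) ((b + c)/2) = (b+c) * poly (cheb (Suc n)) ((b + c)/2) - poly (cheb n) ((b + c)/2)"
    by simp
  also have "\<dots> = (b+c) * ((c^Suc n + b^Suc n)/2) - (c^n + b^n)/2"
    by (simp only: 3(1)[OF 3(3)] 3(2)[OF 3(3)])
  also have "\<dots> = (c * c^Suc n + b * b^Suc n + b * c^(Suc n) + c * b^(Suc n) - c^n - b^n)/2"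
    by (simp add: field_simps)
  also have "\<dots> = (c^Suc (Suc n) + b^Suc (Suc n))/2" unfolding e1 e2 by simp
  finally show ?case .
qed auto

lemma cheb_closed: "b \<noteq> 0 \<Longrightarrow> poly (cheb n) ((b + 1/b)/2) = ((1/b)^n + b^n)/2"
  by (rule cheb_closed0) simp

lemma l1_chs: "c \<ge> 0 \<Longrightarrow> poly_l1 (chs c n) \<le> ((c + sqrt (c^2+1))^n + (c - sqrt (c^2+1))^n)/2"
proof (induction c n rule: chs.induct)
  case (1 c) then show ?case by (simp add: poly_l1_def)
next
  case (2 c) then show ?case by (simp add: poly_l1_def)
next
  case (3 c n)
  let ?s = "sqrt (c^2+1)"
  have s2: "?s^2 = c^2 + 1" by simp
  have "[:0, 2 * c:] * chs c (Suc n) = smult (2*c) (pCons 0 (chs c (Suc n)))"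
    by simp
  hence "poly_l1 (chs c (Suc (Suc n))) \<le> 2 * c * poly_l1 (chs c (Suc n)) + poly_l1 (chs c n)"
    using l1_diff[of "[:0, 2 * c:] * chs c (Suc n)" "chs c n"] 3(3)
    by (simp add: l1_smult l1_pCons0)
  also have "\<dots> \<le> 2 * c * (((c + ?s)^Suc n + (c - ?s)^Suc n)/2) + ((c + ?s)^n + (c - ?s)^n)/2"
    using 3 by (intro add_mono mult_left_mono) auto
  also have "\<dots> = ((c + ?s)^Suc (Suc n) + (c - ?s)^Suc (Suc n))/2"
    by (rule rec_aux) (use s2 in \<open>simp_all add: power2_eq_square algebra_simps\<close>)
  finally show ?case .
qed


lemma rt_le:
  assumes "degree p \<le> k" "poly p 1 = 1" "poly_l1 p \<le> C" "0 \<le> \<rho>"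
    and bnd: "\<And>x. 0 \<le> x \<Longrightarrow> x \<le> \<rho> \<Longrightarrow> \<bar>poly p x\<bar> \<le> M"
  shows "rho_tilde k \<rho> C \<le> M"
proof -
  have bdd: "bdd_above ((\<lambda>x. \<bar>poly q x\<bar>) ` {0..\<rho>})" for q :: "real poly"
  proof -
    have "continuous_on {0..\<rho>} (\<lambda>x. \<bar>poly q x\<bar>)" by (intro continuous_intros)
    hence "compact ((\<lambda>x. \<bar>poly q x\<bar>) ` {0..\<rho>})" by (rule compact_continuous_image) simp
    thus ?thesis by (intro bounded_imp_bdd_above compact_imp_bounded)
  qed
  have nn: "0 \<le> Sup ((\<lambda>x. \<bar>poly q x\<bar>) ` {0..\<rho>})" for q :: "real poly"
    by (rule cSup_upper2[of "\<bar>poly q 0\<bar>"]) (use bdd assms(4) in auto)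
  have "rho_tilde k \<rho> C \<le> Sup ((\<lambda>x. \<bar>poly p x\<bar>) ` {0..\<rho>})"
    unfolding rho_tilde_def
    by (rule cInf_lower) (use assms(1-3) nn in \<open>auto intro!: bdd_belowI[of _ 0]\<close>)
  also have "\<dots> \<le> M"
    by (rule cSup_least) (use assms(4) bnd in auto)
  finally show ?thesis .
qed

lemma combo:
  fixes p0 p1 :: "real poly"
  assumes a: "0 \<le> a" and rho: "0 \<le> \<rho>"
    and d0: "degree p0 \<le> k" and e0: "poly p0 1 = 1" and l0: "poly_l1 p0 \<le> C0"
    and b0: "\<And>x. 0 \<le> x \<Longrightarrow> x \<le> \<rho> \<Longrightarrow> \<bar>poly p0 x\<bar> \<le> s0"
    and v0: "s0 + 3 * a * (real k)\<^sup>2 * C0\<^sup>2 < r"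
    and d1: "degree p1 \<le> k" and e1: "poly p1 1 = 1" and l1: "poly_l1 p1 \<le> C1"
    and b1: "\<And>x. 0 \<le> x \<Longrightarrow> x \<le> \<rho> \<Longrightarrow> \<bar>poly p1 x\<bar> \<le> s1"
    and v1: "s1 + 3 * a * (real k)\<^sup>2 * C1\<^sup>2 < r"
    and C: "C0 \<le> C" "C \<le> C1"
  shows "rho_hat k \<rho> a C < r"
proof (cases "C0 = C1")
  case True
  hence "C = C0" using C by simp
  have "rho_tilde k \<rho> C \<le> s0" using rt_le[OF d0 e0 _ rho b0] l0 C by simp
  thus ?thesis using v0 \<open>C = C0\<close> unfolding rho_hat_def by simp
next
  case False
  hence lt: "C0 < C1" using C by simp
  define l where "l = (C1 - C) / (C1 - C0)"
  have l01: "0 \<le> l" "l \<le> 1" using lt C by (auto simp: l_def field_simps)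
  have h: "l * (C1 - C0) = C1 - C" using lt by (simp add: l_def)
  hence h2: "l * C1 - l * C0 = C1 - C" by (simp add: right_diff_distrib)
  have Ceq: "C = l * C0 + (1 - l) * C1" using h2 by (simp add: left_diff_distrib)
  define q where "q = smult l p0 + smult (1 - l) p1"
  have dq: "degree q \<le> k" unfolding q_def
    by (intro degree_add_le order.trans[OF degree_smult_le] d0 d1)
  have eq: "poly q 1 = 1" unfolding q_def using e0 e1 by simp
  have "poly_l1 q \<le> l * poly_l1 p0 + (1 - l) * poly_l1 p1"
    unfolding q_def using l1_add[of "smult l p0" "smult (1-l) p1"] l01 by (simp add: l1_smult)
  also have "\<dots> \<le> l * C0 + (1 - l) * C1" using l01 l0 l1 by (intro add_mono mult_left_mono) auto
  finally have lq: "poly_l1 q \<le> C" using Ceq by simp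
  have bq: "\<bar>poly q x\<bar> \<le> l * s0 + (1 - l) * s1" if "0 \<le> x" "x \<le> \<rho>" for x
  proof -
    have "\<bar>poly q x\<bar> \<le> l * \<bar>poly p0 x\<bar> + (1 - l) * \<bar>poly p1 x\<bar>"
      unfolding q_def using l01 by (simp add: abs_triangle_ineq[THEN order.trans] abs_mult)
    also have "\<dots> \<le> l * s0 + (1 - l) * s1"
      using l01 b0[OF that] b1[OF that] by (intro add_mono mult_left_mono) auto
    finally show ?thesis .
  qed
  have rt: "rho_tilde k \<rho> C \<le> l * s0 + (1 - l) * s1" by (rule rt_le[OF dq eq lq rho bq])
  have sq: "C\<^sup>2 \<le> l * C0\<^sup>2 + (1 - l) * C1\<^sup>2"
  proof -
    have "l * C0\<^sup>2 + (1 - l) * C1\<^sup>2 - (l * C0 + (1 - l) * C1)\<^sup>2 = l * (1 - l) * (C0 - C1)\<^sup>2"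
      by (simp add: power2_eq_square algebra_simps)
    hence "l * C0\<^sup>2 + (1 - l) * C1\<^sup>2 - C\<^sup>2 = l * (1 - l) * (C0 - C1)\<^sup>2" using Ceq by simp
    moreover have "0 \<le> l * (1 - l) * (C0 - C1)\<^sup>2" using l01 by simp
    ultimately show ?thesis by linarith
  qed
  have k3: "0 \<le> 3 * a * (real k)\<^sup>2" using a by simp
  have "rho_hat k \<rho> a C \<le> l * s0 + (1 - l) * s1 + 3 * a * (real k)\<^sup>2 * (l * C0\<^sup>2 + (1 - l) * C1\<^sup>2)"
    unfolding rho_hat_def using rt mult_left_mono[OF sq k3] by linarith
  also have "\<dots> = l * (s0 + 3 * a * (real k)\<^sup>2 * C0\<^sup>2) + (1 - l) * (s1 + 3 * a * (real k)\<^sup>2 * C1\<^sup>2)"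
    by (simp add: algebra_simps)
  also have "\<dots> < r"
  proof -
    have "l * (s0 + 3 * a * (real k)\<^sup>2 * C0\<^sup>2) \<le> l * r" using l01 v0 by (intro mult_left_mono) auto
    moreover have "(1 - l) * (s1 + 3 * a * (real k)\<^sup>2 * C1\<^sup>2) \<le> (1 - l) * r" using l01 v1 by (intro mult_left_mono) auto
    moreover have "l * (s0 + 3 * a * (real k)\<^sup>2 * C0\<^sup>2) < l * r \<or> (1 - l) * (s1 + 3 * a * (real k)\<^sup>2 * C1\<^sup>2) < (1 - l) * r"
      using l01 v0 v1 by (cases "l = 0") auto
    ultimately show ?thesis by (auto simp: algebra_simps)
  qed
  finally show ?thesis .
qed


lemma beta1:
  assumes "0 < \<rho>" "\<rho> < 1"
  defines "\<beta> \<equiv> (sqrt (1 + \<rho>) - sqrt (1 - \<rho>)) / (sqrt (1 + \<rho>) + sqrt (1 - \<rho>))"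
  shows "0 < \<beta>" "1 / \<rho> = (\<beta> + 1 / \<beta>) / 2"
proof -
  define u where "u = sqrt (1 + \<rho>)"
  define v where "v = sqrt (1 - \<rho>)"
  have u2: "u^2 = 1 + \<rho>" and v2: "v^2 = 1 - \<rho>" using assms by (auto simp: u_def v_def)
  have v0: "0 < v" using assms by (simp add: v_def)
  have uv: "v < u" using assms unfolding u_def v_def by (simp add: real_sqrt_less_iff)
  have b: "\<beta> = (u - v) / (u + v)" by (simp add: \<beta>_def u_def v_def)
  show "0 < \<beta>" using uv v0 b by simp
  have "(\<beta> + 1 / \<beta>) / 2 = ((u - v)^2 + (u + v)^2) / (2 * (u - v) * (u + v))"
    using uv v0 unfolding b by (simp add: field_simps power2_eq_square)
  also have "\<dots> = (2 * (u^2 + v^2)) / (2 * (u^2 - v^2))"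
    by (simp add: power2_eq_square algebra_simps)
  also have "\<dots> = 1 / \<rho>" using u2 v2 assms by simp
  finally show "1 / \<rho> = (\<beta> + 1 / \<beta>) / 2" by simp
qed

lemma beta2:
  assumes "0 < \<rho>" "\<rho> < 1"
  defines "\<beta> \<equiv> (1 - sqrt (1 - \<rho>)) / (1 + sqrt (1 - \<rho>))"
  shows "0 < \<beta>" "(2 - \<rho>) / \<rho> = (\<beta> + 1 / \<beta>) / 2"
proof -
  define v where "v = sqrt (1 - \<rho>)"
  have v2: "v^2 = 1 - \<rho>" using assms by (auto simp: v_def)
  have v0: "0 < v" using assms by (simp add: v_def)
  have v1: "v < 1" using assms unfolding v_def by simp
  have b: "\<beta> = (1 - v) / (1 + v)" by (simp add: \<beta>_def v_def)
  show "0 < \<beta>" using v1 v0 b by simp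
  have "(\<beta> + 1 / \<beta>) / 2 = ((1 - v)^2 + (1 + v)^2) / (2 * (1 - v) * (1 + v))"
    using v1 v0 unfolding b by (simp add: field_simps power2_eq_square)
  also have "\<dots> = (2 * (1 + v^2)) / (2 * (1 - v^2))"
    by (simp add: power2_eq_square algebra_simps)
  also have "\<dots> = (2 - \<rho>) / \<rho>" using v2 assms by (simp add: field_simps)
  finally show "(2 - \<rho>) / \<rho> = (\<beta> + 1 / \<beta>) / 2" by argo
qed

lemma inv_T:
  assumes "0 < (\<beta>::real)"
  shows "1 / (((1/\<beta>)^k + \<beta>^k)/2) = 2 * \<beta>^k / (1 + \<beta>^(2*k))"
  using assms by (simp add: field_simps power_mult_distrib power_mult power2_eq_square)

theorem proposition8:
  fixes f :: "real ^ 'n \<Rightarrow> real"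
    and f' :: "real ^ 'n \<Rightarrow> real ^ 'n"
    and H :: "real ^ 'n \<Rightarrow> real ^ 'n ^ 'n"
    and \<mu> L \<eta> :: real and x0 :: "real ^ 'n" and k :: nat
    and \<rho> C0 a B :: real
  assumes grad: "\<And>x. (f has_derivative (\<lambda>h. f' x \<bullet> h)) (at x)"
    and hess: "\<And>x. (f' has_derivative (\<lambda>h. H x *v h)) (at x)"
    and hess_cont: "continuous_on UNIV H"
    and sconv: "strongly_convex_on UNIV \<mu> f"
    and grad_lip: "L-lipschitz_on UNIV f'"
    and hess_lip: "\<And>x y. onorm (\<lambda>h. H x *v h - H y *v h) \<le> \<eta> * dist x y"
    and mu_pos: "0 < \<mu>" and mu_L: "\<mu> < L"
    and k: "1 \<le> k"
    and rho_def: "\<rho> = 1 - \<mu> / L"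
    and C0_def: "C0 = (2 + \<rho> ^ k) / (2 - \<rho> ^ k)"
    and a_def: "a = \<eta> / L\<^sup>2 * norm (f' x0)"
    and B_def: "B = \<rho> ^ k * (1 - \<rho> ^ k) * (2 - \<rho> ^ k) / (3 * (real k)\<^sup>2 * (2 + \<rho> ^ k)\<^sup>2)"
  shows "(a < B \<longrightarrow>
           (\<exists>lo hi. 1 \<le> lo \<and> lo < hi \<and> C0 \<in> {lo..hi} \<and>
              (\<forall>C\<in>{lo..hi}. rho_hat k \<rho> a C < \<rho> ^ k)))
       \<and> (a < min B ((\<rho> ^ k - rho_one k \<rho>) / (3 * (real k)\<^sup>2 * (C_one k \<rho>)\<^sup>2)) \<longrightarrow>
           (\<forall>C\<in>{C0..C_one k \<rho>}. rho_hat k \<rho> a C < \<rho> ^ k))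
       \<and> (a < min B ((\<rho> ^ k - rho_star k \<rho>) / (3 * (real k)\<^sup>2 * (C_star k \<rho>)\<^sup>2)) \<longrightarrow>
           (\<forall>C\<in>{C0..C_star k \<rho>}. rho_hat k \<rho> a C < \<rho> ^ k))"
proof -
  define r where "r = \<rho> ^ k"
  have L0: "0 < L" using mu_pos mu_L by simp
  have rho0: "0 < \<rho>" "\<rho> < 1" using mu_pos mu_L L0 by (auto simp: rho_def field_simps)
  have r0: "0 < r" "r < 1" using rho0 k by (auto simp: r_def power_less_one_iff)
  have k0: "0 < real k" using k by simp
  have eta0: "0 \<le> \<eta>"
  proof -
    define y :: "real ^ 'n" where "y = axis undefined 1"
    have y0: "y \<noteq> 0" by (simp add: y_def axis_eq_0_iff)
    have "0 \<le> onorm (\<lambda>h. H 0 *v h - H y *v h)"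
      by (intro onorm_pos_le bounded_linear_sub matrix_vector_mul_bounded_linear)
    also have "\<dots> \<le> \<eta> * dist 0 y" by (rule hess_lip)
    finally have "0 \<le> \<eta> * dist 0 y" .
    moreover have "0 < dist 0 y" using y0 by simp
    ultimately show ?thesis by (simp add: zero_le_mult_iff)
  qed
  have a0: "0 \<le> a" unfolding a_def using eta0 L0 by simp
  define s0 where "s0 = r / (2 - r)"
  define p0 where "p0 = [:- r / (2 - r):] + monom (2 / (2 - r)) k"
  have d0: "degree p0 \<le> k" unfolding p0_def
    by (intro degree_add_le) (auto simp: degree_monom_le)
  have rr: "r * r + 4 \<noteq> r * 4"
  proof -
    have "r * 4 < 4" "0 \<le> r * r" using r0 by auto
    thus ?thesis by linarith
  qed
  have e0: "poly p0 1 = 1" using r0 rr by (simp add: p0_def poly_monom field_simps)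
  have l0: "poly_l1 p0 \<le> C0"
  proof -
    have "poly_l1 p0 \<le> r / (2 - r) + 2 / (2 - r)"
      using l1_add[of "[:- r / (2 - r):]" "monom (2 / (2 - r)) k"] r0
      by (simp add: p0_def l1_const l1_monom)
    also have "\<dots> = (2 + r) / (2 - r)" by (simp add: add_divide_distrib[symmetric] add.commute)
    also have "\<dots> = C0" by (simp add: C0_def r_def)
    finally show ?thesis .
  qed
  have b0: "\<bar>poly p0 x\<bar> \<le> s0" if "0 \<le> x" "x \<le> \<rho>" for x
  proof -
    have "x^k \<le> r" unfolding r_def using that by (intro power_mono) auto
    moreover have "0 \<le> x^k" using that by simp
    ultimately have "\<bar>2 * x^k - r\<bar> \<le> r" by auto
    hence "\<bar>2 * x^k - r\<bar> / (2 - r) \<le> r / (2 - r)" using r0 by (intro divide_right_mono) auto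
    moreover have "poly p0 x = (2 * x^k - r) / (2 - r)"
      by (simp add: p0_def poly_monom diff_divide_distrib)
    ultimately show ?thesis using r0 by (simp add: s0_def)
  qed
  have C0ge: "1 \<le> C0" using r0 by (simp add: C0_def r_def)
  define D where "D = r * (1 - r) / (2 - r)"
  have s0D: "s0 + D = r"
  proof -
    have "s0 + D = (r * (2 - r)) / (2 - r)" unfolding s0_def D_def
      by (simp add: add_divide_distrib[symmetric] algebra_simps)
    also have "\<dots> = r" using r0 by simp
    finally show ?thesis .
  qed
  have D0: "0 < D" using r0 by (simp add: D_def)
  have rt_C0: "rho_tilde k \<rho> C \<le> s0" if "C0 \<le> C" for C
    by (rule rt_le[OF d0 e0 _ _ b0]) (use l0 that rho0 in auto)
  have aB: "3 * a * (real k)\<^sup>2 * C0\<^sup>2 < D" if "a < B"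
  proof -
    have pos: "0 < 3 * (real k)\<^sup>2 * C0\<^sup>2" using k0 C0ge by simp
    have "a * (3 * (real k)\<^sup>2 * C0\<^sup>2) < B * (3 * (real k)\<^sup>2 * C0\<^sup>2)"
      using that pos by (rule mult_strict_right_mono)
    also have "B * (3 * (real k)\<^sup>2 * C0\<^sup>2) = D"
    proof -
      define P where "P = 2 - r"
      define Q where "Q = 3 * (real k)\<^sup>2 * (2 + r)\<^sup>2"
      have P0: "0 < P" using r0 by (simp add: P_def)
      have Q0: "0 < Q" using r0 k0 by (simp add: Q_def)
      have c: "3 * (real k)\<^sup>2 * C0\<^sup>2 = Q / P\<^sup>2"
        by (simp add: C0_def Q_def P_def r_def power_divide)
      have b: "B = r * (1 - r) * P / Q" by (simp add: B_def r_def P_def Q_def)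
      have "B * (Q / P\<^sup>2) = r * (1 - r) / P"
        unfolding b using P0 Q0 by (simp add: field_simps power2_eq_square)
      thus ?thesis unfolding c D_def P_def .
    qed
    finally show ?thesis by (simp add: algebra_simps)
  qed
  have v0: "s0 + 3 * a * (real k)\<^sup>2 * C0\<^sup>2 < r" if "a < B" using aB[OF that] s0D by simp
  have endp: "s + 3 * a * (real k)\<^sup>2 * C1\<^sup>2 < r" if "a < (r - s) / (3 * (real k)\<^sup>2 * C1\<^sup>2)" for s C1
  proof (cases "C1 = 0")
    case True thus ?thesis using that a0 by simp
  next
    case False
    hence pos: "0 < 3 * (real k)\<^sup>2 * C1\<^sup>2" using k0 by simp
    hence "a * (3 * (real k)\<^sup>2 * C1\<^sup>2) < r - s" using that by (simp add: pos_less_divide_eq)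
    thus ?thesis by (simp add: algebra_simps)
  qed
  have part1: "\<exists>lo hi. 1 \<le> lo \<and> lo < hi \<and> C0 \<in> {lo..hi} \<and>
              (\<forall>C\<in>{lo..hi}. rho_hat k \<rho> a C < \<rho> ^ k)" if aB': "a < B"
  proof -
    obtain hi where hi: "C0 < hi" "\<And>C. C0 \<le> C \<Longrightarrow> C \<le> hi \<Longrightarrow> 3 * a * (real k)\<^sup>2 * C\<^sup>2 < D"
    proof (cases "a = 0")
      case True
      show ?thesis by (rule that[of "C0 + 1"]) (use True D0 in auto)
    next
      case False
      hence apos: "0 < a" using a0 by simp
      have q0: "0 < 3 * a * (real k)\<^sup>2" using apos k0 by simp
      define S where "S = sqrt (D / (3 * a * (real k)\<^sup>2))"
      have "C0\<^sup>2 < D / (3 * a * (real k)\<^sup>2)" using aB[OF aB'] q0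
        by (simp add: pos_less_divide_eq mult.commute)
      hence C0S: "C0 < S" unfolding S_def by (rule real_less_rsqrt)
      have S2: "S\<^sup>2 = D / (3 * a * (real k)\<^sup>2)" unfolding S_def using D0 q0 by simp
      show ?thesis
      proof (rule that[of "(C0 + S) / 2"])
        show "C0 < (C0 + S) / 2" using C0S by simp
        fix C assume C: "C0 \<le> C" "C \<le> (C0 + S) / 2"
        have "C < S" using C C0S by simp
        hence "C\<^sup>2 < S\<^sup>2" using C C0ge by (intro power_strict_mono) auto
        hence "C\<^sup>2 < D / (3 * a * (real k)\<^sup>2)" using S2 by simp
        thus "3 * a * (real k)\<^sup>2 * C\<^sup>2 < D" using q0 by (simp add: pos_less_divide_eq mult.commute)
      qed
    qed
    show ?thesis
    proof (intro exI conjI ballI)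
      show "1 \<le> C0" "C0 < hi" "C0 \<in> {C0..hi}" using C0ge hi by auto
      fix C assume C: "C \<in> {C0..hi}"
      have "rho_hat k \<rho> a C \<le> s0 + 3 * a * (real k)\<^sup>2 * C\<^sup>2"
        unfolding rho_hat_def using rt_C0[of C] C by simp
      also have "\<dots> < s0 + D" using hi(2)[of C] C by simp
      finally show "rho_hat k \<rho> a C < \<rho> ^ k" using s0D r_def by simp
    qed
  qed
  have part2: "\<forall>C\<in>{C0..C_one k \<rho>}. rho_hat k \<rho> a C < \<rho> ^ k"
    if hyp: "a < min B ((\<rho> ^ k - rho_one k \<rho>) / (3 * (real k)\<^sup>2 * (C_one k \<rho>)\<^sup>2))"
  proof
    fix C assume C: "C \<in> {C0..C_one k \<rho>}"
    define \<beta> where "\<beta> = (sqrt (1 + \<rho>) - sqrt (1 - \<rho>)) / (sqrt (1 + \<rho>) + sqrt (1 - \<rho>))"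
    have bpos: "0 < \<beta>" and bb: "1 / \<rho> = (\<beta> + 1 / \<beta>) / 2"
      using beta1[OF rho0] by (simp_all add: \<beta>_def)
    define T where "T = poly (cheb k) (1 / \<rho>)"
    have T: "T = ((1/\<beta>)^k + \<beta>^k)/2" unfolding T_def by (subst bb) (rule cheb_closed, use bpos in simp)
    have Tpos: "0 < T"
    proof -
      have "0 < (1/\<beta>)^k" "0 < \<beta>^k" using bpos by simp_all
      thus ?thesis unfolding T by simp
    qed
    have s1: "1 / T = rho_one k \<rho>" unfolding T inv_T[OF bpos] by (simp add: rho_one_def Let_def \<beta>_def)
    define p1 where "p1 = smult (1 / T) (chs (1 / \<rho>) k)"
    have d1: "degree p1 \<le> k" unfolding p1_def by (rule order.trans[OF degree_smult_le degree_chs])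
    have e1: "poly p1 1 = 1" using Tpos by (simp add: p1_def poly_chs T_def)
    have l1: "poly_l1 p1 \<le> C_one k \<rho>"
    proof -
      define c where "c = 1 / \<rho>"
      have c0: "0 \<le> c" using rho0 by (simp add: c_def)
      have sq: "sqrt (c^2 + 1) = sqrt (1 + \<rho>\<^sup>2) / \<rho>"
      proof -
        have "c^2 + 1 = (1 + \<rho>\<^sup>2) / \<rho>\<^sup>2" using rho0 by (simp add: c_def field_simps)
        hence "sqrt (c^2 + 1) = sqrt ((1 + \<rho>\<^sup>2) / \<rho>\<^sup>2)" by (rule arg_cong)
        also have "\<dots> = sqrt (1 + \<rho>\<^sup>2) / \<rho>" using rho0 by (simp add: real_sqrt_divide)
        finally show ?thesis .
      qed
      have "poly_l1 p1 = (1 / T) * poly_l1 (chs c k)" using Tpos by (simp add: p1_def l1_smult c_def)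
      also have "\<dots> \<le> (1 / T) * (((c + sqrt (c^2+1))^k + (c - sqrt (c^2+1))^k)/2)"
        using Tpos l1_chs[OF c0, of k] by (intro mult_left_mono) auto
      also have "(c + sqrt (c^2+1)) = (1 + sqrt (1 + \<rho>\<^sup>2)) / \<rho>"
        unfolding sq using rho0 by (simp add: c_def add_divide_distrib)
      also have "(c - sqrt (c^2+1)) = (1 - sqrt (1 + \<rho>\<^sup>2)) / \<rho>"
        unfolding sq using rho0 by (simp add: c_def diff_divide_distrib)
      also have "(1 / T) * ((((1 + sqrt (1 + \<rho>\<^sup>2)) / \<rho>)^k + ((1 - sqrt (1 + \<rho>\<^sup>2)) / \<rho>)^k)/2)
          = C_one k \<rho>"
        unfolding C_one_def s1[symmetric] using rho0 by (simp add: power_divide field_simps)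
      finally show ?thesis .
    qed
    have b1: "\<bar>poly p1 x\<bar> \<le> rho_one k \<rho>" if "0 \<le> x" "x \<le> \<rho>" for x
    proof -
      have "\<bar>poly (cheb k) (1 / \<rho> * x)\<bar> \<le> 1"
        using that rho0 by (intro cheb_bound) (auto simp: field_simps)
      hence "\<bar>poly p1 x\<bar> \<le> 1 / T" using Tpos by (simp add: p1_def poly_chs abs_mult divide_le_eq)
      thus ?thesis using s1 by simp
    qed
    have hB: "a < B" and h2: "a < (r - rho_one k \<rho>) / (3 * (real k)\<^sup>2 * (C_one k \<rho>)\<^sup>2)"
      using hyp by (auto simp: r_def)
    show "rho_hat k \<rho> a C < \<rho> ^ k"
      using combo[OF a0 _ d0 e0 l0 b0 v0[OF hB] d1 e1 l1 b1 endp[OF h2]] C rho0 by (simp add: r_def)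
  qed
  have part3: "\<forall>C\<in>{C0..C_star k \<rho>}. rho_hat k \<rho> a C < \<rho> ^ k"
    if hyp: "a < min B ((\<rho> ^ k - rho_star k \<rho>) / (3 * (real k)\<^sup>2 * (C_star k \<rho>)\<^sup>2))"
  proof
    fix C assume C: "C \<in> {C0..C_star k \<rho>}"
    define \<beta> where "\<beta> = (1 - sqrt (1 - \<rho>)) / (1 + sqrt (1 - \<rho>))"
    have bpos: "0 < \<beta>" and bb: "(2 - \<rho>) / \<rho> = (\<beta> + 1 / \<beta>) / 2"
      using beta2[OF rho0] by (simp_all add: \<beta>_def)
    define T where "T = poly (cheb k) ((2 - \<rho>) / \<rho>)"
    have T: "T = ((1/\<beta>)^k + \<beta>^k)/2" unfolding T_def by (subst bb) (rule cheb_closed, use bpos in simp)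
    have Tpos: "0 < T"
    proof -
      have "0 < (1/\<beta>)^k" "0 < \<beta>^k" using bpos by simp_all
      thus ?thesis unfolding T by simp
    qed
    have s1: "1 / T = rho_star k \<rho>" unfolding T inv_T[OF bpos] by (simp add: rho_star_def Let_def \<beta>_def)
    have pdef: "p_star k \<rho> = smult (1 / T) (pcompose (cheb k) [:-1, 2 / \<rho>:])"
    proof -
      have "\<bar>poly (cheb k) ((2 - \<rho>) / \<rho>)\<bar> = T" using Tpos T_def[symmetric] by (simp only: abs_of_pos)
      thus ?thesis unfolding p_star_def by simp
    qed
    have d1: "degree (p_star k \<rho>) \<le> k" unfolding pdef
      by (rule order.trans[OF degree_smult_le]) (use degree_cheb[of k] in \<open>simp add: degree_pcompose\<close>)
    have one: "-1 + 2 / \<rho> = (2 - \<rho>) / \<rho>" using rho0 by (simp add: field_simps)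
    have e1: "poly (p_star k \<rho>) 1 = 1"
    proof -
      have q1: "poly [:-1, 2 / \<rho>:] 1 = (2 - \<rho>) / \<rho>" using one by simp
      have "poly (p_star k \<rho>) 1 = 1 / T * poly (cheb k) (poly [:-1, 2 / \<rho>:] 1)"
        by (simp only: pdef poly_smult poly_pcompose)
      also have "\<dots> = 1" unfolding q1 T_def[symmetric] using Tpos by simp
      finally show ?thesis .
    qed
    have l1: "poly_l1 (p_star k \<rho>) \<le> C_star k \<rho>" by (simp add: C_star_def)
    have b1: "\<bar>poly (p_star k \<rho>) x\<bar> \<le> rho_star k \<rho>" if "0 \<le> x" "x \<le> \<rho>" for x
    proof -
      have "\<bar>poly (cheb k) (-1 + x * (2 / \<rho>))\<bar> \<le> 1"
        using that rho0 by (intro cheb_bound) (auto simp: field_simps)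
      hence "\<bar>poly (p_star k \<rho>) x\<bar> \<le> 1 / T" using Tpos
        by (simp add: pdef poly_pcompose abs_mult divide_le_eq)
      thus ?thesis using s1 by simp
    qed
    have hB: "a < B" and h2: "a < (r - rho_star k \<rho>) / (3 * (real k)\<^sup>2 * (C_star k \<rho>)\<^sup>2)"
      using hyp by (auto simp: r_def)
    show "rho_hat k \<rho> a C < \<rho> ^ k"
      using combo[OF a0 _ d0 e0 l0 b0 v0[OF hB] d1 e1 l1 b1 endp[OF h2]] C rho0 by (simp add: r_def)
  qed
  show ?thesis using part1 part2 part3 by blast
qed

end
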